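(* Let $\mathbb{Z}_{(p)}\langle t\rangle$ be the subring of $\mathbb{Z}_{(p)}[[t]]$ consisting of series $\sum_{i\ge0}c_it^i$ with $c_i\to0$ $p$-adically as $i\to\infty$. Define \[ f(z,t) := \frac{E_p(zt)E_p(t^p)}{E_p(t)E_p(zt^p)}\in\mathbb{Z}_{(p)}[[t,1-z]]. \] Then $f(z,t)\in z+(t-1)\,\mathbb{Z}_{(p)}\langle t\rangle[[1-z]]$.
   Context: $p$ is a prime. The Artin–Hasse exponential is $E_p(t)=\exp\left(\sum_{i\ge0}t^{p^i}/p^i\right)$; it is known that $E_p(t)\in\mathbb{Z}_{(p)}[[t]]$ (with constant term $1$), so the quotient defining $f$ makes sense in $\mathbb{Z}_{(p)}[[t,1-z]]$, writing $z = 1-(1-z)$. *)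

theory Defs
  imports "HOL-Computational_Algebra.Computational_Algebra"
begin

definition Zp :: "nat \<Rightarrow> rat set" where
  "Zp p = {q. \<not> int p dvd snd (quotient_of q)}"

definition AH_log :: "nat \<Rightarrow> rat fps" where
  "AH_log p = Abs_fps (\<lambda>n. if (\<exists>i. n = p ^ i) then 1 / of_nat n else 0)"

definition artin_hasse :: "nat \<Rightarrow> rat fps" where
  "artin_hasse p = fps_exp 1 oo AH_log p"

text \<open>Bivariate series in t (outer variable) and w = 1 - z (inner variable):
  type rat fps fps, where (F $ i) $ j is the coefficient of t^i w^j.
  subst_tm a c m is the series a(c * t^m), for a univariate a(t) and c in Q[[w]].\<close>
definition subst_tm :: "rat fps \<Rightarrow> rat fps \<Rightarrow> nat \<Rightarrow> rat fps fps" where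
  "subst_tm a c m = Abs_fps (\<lambda>n. if m dvd n then fps_const (a $ (n div m)) * c ^ (n div m) else 0)"

definition zvar :: "rat fps" where
  "zvar = 1 - fps_X"

definition f_AH :: "nat \<Rightarrow> rat fps fps" where
  "f_AH p = subst_tm (artin_hasse p) zvar 1 * subst_tm (artin_hasse p) 1 p *
      inverse (subst_tm (artin_hasse p) 1 1 * subst_tm (artin_hasse p) zvar p)"

text \<open>g lies in Z_(p)<t>[[w]]: all coefficients in Z_(p), and for every fixed
  power w^j, the t-coefficients tend to 0 p-adically.\<close>
definition in_Zp_tate_pow :: "nat \<Rightarrow> rat fps fps \<Rightarrow> bool" where
  "in_Zp_tate_pow p g \<longleftrightarrow>
     (\<forall>i j. (g $ i) $ j \<in> Zp p) \<and>
     (\<forall>j k. \<forall>\<^sub>F i in sequentially. \<exists>r \<in> Zp p. (g $ i) $ j = of_nat (p ^ k) * r)"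

end

theory Submission
  imports Defs "HOL-Number_Theory.Number_Theory"
begin

locale padic = fixes p :: nat assumes p: "prime p" begin

lemma Zp_iff: "q \<in> Zp p \<longleftrightarrow> (\<exists>a b. b \<noteq> 0 \<and> \<not> int p dvd b \<and> q = of_int a / of_int b)"
proof
  assume "q \<in> Zp p"
  obtain n d where nd: "quotient_of q = (n, d)" by (cases "quotient_of q")
  have "d > 0" using quotient_of_denom_pos[OF nd] .
  moreover have "q = of_int n / of_int d" using quotient_of_div[OF nd] .
  moreover have "\<not> int p dvd d" using \<open>q \<in> Zp p\<close> nd by (simp add: Zp_def)
  ultimately show "\<exists>a b. b \<noteq> 0 \<and> \<not> int p dvd b \<and> q = of_int a / of_int b" by (intro exI[of _ n] exI[of _ d]) auto
next
  assume "\<exists>a b. b \<noteq> 0 \<and> \<not> int p dvd b \<and> q = of_int a / of_int b"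
  then obtain a b where ab: "b \<noteq> 0" "\<not> int p dvd b" "q = of_int a / of_int b" by auto
  obtain n d where nd: "quotient_of q = (n, d)" by (cases "quotient_of q")
  have d0: "d > 0" using quotient_of_denom_pos[OF nd] .
  have cop: "coprime n d" using quotient_of_coprime[OF nd] .
  have "of_int n / of_int d = (of_int a / of_int b :: rat)" using quotient_of_div[OF nd] ab(3) by simp
  hence "of_int (n * b) = (of_int (a * d) :: rat)" using d0 ab(1) by (simp add: field_simps)
  hence "n * b = a * d" by (simp only: of_int_eq_iff)
  hence "d dvd n * b" by (metis dvd_triv_right)
  hence "d dvd b" using cop by (simp add: coprime_dvd_mult_right_iff coprime_commute)
  hence "\<not> int p dvd d" using ab(2) dvd_trans by blast
  thus "q \<in> Zp p" by (simp add: Zp_def nd)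
qed

lemma Zp_intro: "b \<noteq> 0 \<Longrightarrow> \<not> int p dvd b \<Longrightarrow> of_int a / of_int b \<in> Zp p"
  using Zp_iff by blast

lemma Zp_of_int [simp]: "of_int a \<in> Zp p"
proof -
  have "\<not> int p dvd 1" using prime_gt_1_nat[OF p] by simp
  thus ?thesis using Zp_intro[of 1 a] by simp
qed

lemma Zp_of_nat [simp]: "of_nat a \<in> Zp p"
  using Zp_of_int[of "int a"] by simp

lemma Zp_0 [simp]: "0 \<in> Zp p" using Zp_of_int[of 0] by simp
lemma Zp_1 [simp]: "1 \<in> Zp p" using Zp_of_int[of 1] by simp

lemma Zp_add [intro]: assumes "x \<in> Zp p" "y \<in> Zp p" shows "x + y \<in> Zp p"
proof -
  obtain a b where ab: "b \<noteq> 0" "\<not> int p dvd b" "x = of_int a / of_int b" using assms(1) Zp_iff by blast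
  obtain c d where cd: "d \<noteq> 0" "\<not> int p dvd d" "y = of_int c / of_int d" using assms(2) Zp_iff by blast
  have pr: "prime (int p)" using p by simp
  have "\<not> int p dvd b * d" using ab cd pr by (simp add: prime_dvd_mult_iff)
  moreover have "x + y = of_int (a * d + c * b) / of_int (b * d)" using ab cd by (simp add: field_simps)
  moreover have "b * d \<noteq> 0" using ab cd by simp
  ultimately show ?thesis unfolding Zp_iff by blast
qed

lemma Zp_mult [intro]: assumes "x \<in> Zp p" "y \<in> Zp p" shows "x * y \<in> Zp p"
proof -
  obtain a b where ab: "b \<noteq> 0" "\<not> int p dvd b" "x = of_int a / of_int b" using assms(1) Zp_iff by blast
  obtain c d where cd: "d \<noteq> 0" "\<not> int p dvd d" "y = of_int c / of_int d" using assms(2) Zp_iff by blast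
  have pr: "prime (int p)" using p by simp
  have "\<not> int p dvd b * d" using ab cd pr by (simp add: prime_dvd_mult_iff)
  moreover have "x * y = of_int (a * c) / of_int (b * d)" using ab cd by (simp add: field_simps)
  moreover have "b * d \<noteq> 0" using ab cd by simp
  ultimately show ?thesis unfolding Zp_iff by blast
qed

lemma Zp_uminus [intro]: assumes "x \<in> Zp p" shows "- x \<in> Zp p"
  using Zp_mult[OF Zp_of_int[of "-1"] assms] by simp

lemma Zp_diff [intro]: assumes "x \<in> Zp p" "y \<in> Zp p" shows "x - y \<in> Zp p"
  using Zp_add[OF assms(1) Zp_uminus[OF assms(2)]] by simp

lemma Zp_sum [intro]: "(\<And>i. i \<in> A \<Longrightarrow> f i \<in> Zp p) \<Longrightarrow> sum f A \<in> Zp p"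
  by (induction A rule: infinite_finite_induct) auto

lemma Zp_prod [intro]: "(\<And>i. i \<in> A \<Longrightarrow> f i \<in> Zp p) \<Longrightarrow> prod f A \<in> Zp p"
  by (induction A rule: infinite_finite_induct) auto

lemma Zp_power [intro]: "x \<in> Zp p \<Longrightarrow> x ^ n \<in> Zp p"
  by (induction n) auto

lemma Zp_inv_nat: "\<not> p dvd u \<Longrightarrow> 1 / of_nat u \<in> Zp p"
  using Zp_intro[of "int u" 1] by (cases "u = 0") auto

lemma Zp_div_nat: "x \<in> Zp p \<Longrightarrow> \<not> p dvd u \<Longrightarrow> x / of_nat u \<in> Zp p"
  using Zp_mult[OF _ Zp_inv_nat, of x u] by simp

definition small :: "nat \<Rightarrow> rat \<Rightarrow> bool" where
  "small k q \<longleftrightarrow> (\<exists>r \<in> Zp p. q = of_nat (p ^ k) * r)"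

lemma small_0_iff: "small 0 q \<longleftrightarrow> q \<in> Zp p" by (simp add: small_def)

lemma small_zero [simp]: "small k 0" by (auto simp: small_def intro!: bexI[of _ 0])

lemma small_add: "small k x \<Longrightarrow> small k y \<Longrightarrow> small k (x + y)"
proof -
  assume "small k x" "small k y"
  then obtain r s where "r \<in> Zp p" "s \<in> Zp p" "x = of_nat (p^k) * r" "y = of_nat (p^k) * s"
    unfolding small_def by blast
  thus ?thesis unfolding small_def by (intro bexI[of _ "r + s"]) (auto simp: distrib_left)
qed

lemma small_uminus: "small k x \<Longrightarrow> small k (- x)"
  unfolding small_def by (auto intro!: bexI[of _ "- _"])

lemma small_diff: "small k x \<Longrightarrow> small k y \<Longrightarrow> small k (x - y)"
  using small_add[of k x "-y"] small_uminus[of k y] by simp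

lemma small_sum: "(\<And>i. i \<in> A \<Longrightarrow> small k (f i)) \<Longrightarrow> small k (sum f A)"
  by (induction A rule: infinite_finite_induct) (auto intro: small_add)

lemma small_mult_Zp: "small k x \<Longrightarrow> y \<in> Zp p \<Longrightarrow> small k (x * y)"
  unfolding small_def by (auto intro!: bexI[of _ "_ * y"])

lemma small_mono: "small k x \<Longrightarrow> k' \<le> k \<Longrightarrow> small k' x"
proof -
  assume "small k x" "k' \<le> k"
  then obtain r where r: "r \<in> Zp p" "x = of_nat (p ^ k) * r" by (auto simp: small_def)
  have "x = of_nat (p ^ k') * (of_nat (p ^ (k - k')) * r)"
    using r \<open>k' \<le> k\<close> by (simp add: power_add[symmetric])
  moreover have "of_nat (p ^ (k - k')) * r \<in> Zp p" using r by (intro Zp_mult Zp_of_nat)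
  ultimately show ?thesis unfolding small_def by blast
qed

lemma small_pow: "x \<in> Zp p \<Longrightarrow> small k (of_nat (p ^ k) * x)"
  by (auto simp: small_def)

definition bnd :: "nat \<Rightarrow> rat \<Rightarrow> bool" where
  "bnd M q \<longleftrightarrow> of_nat (p ^ M) * q \<in> Zp p"

lemma bnd_mono: "bnd M q \<Longrightarrow> M \<le> M' \<Longrightarrow> bnd M' q"
  unfolding bnd_def
  using Zp_mult[OF Zp_of_nat[of "p ^ (M' - M)"], of "of_nat (p ^ M) * q"]
  by (simp add: mult.assoc[symmetric] power_add[symmetric])

lemma bnd_add: "bnd M x \<Longrightarrow> bnd M y \<Longrightarrow> bnd M (x + y)"
  unfolding bnd_def by (simp add: distrib_left Zp_add)

lemma bnd_uminus: "bnd M x \<Longrightarrow> bnd M (- x)"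
  unfolding bnd_def using Zp_uminus by fastforce

lemma bnd_diff: "bnd M x \<Longrightarrow> bnd M y \<Longrightarrow> bnd M (x - y)"
  using bnd_add[of M x "-y"] bnd_uminus[of M y] by simp

lemma bnd_sum: "(\<And>i. i \<in> A \<Longrightarrow> bnd M (f i)) \<Longrightarrow> bnd M (sum f A)"
proof (induction A rule: infinite_finite_induct)
  case (insert x F) thus ?case using bnd_add by simp
qed (auto simp: bnd_def)

lemma bnd_Zp: "q \<in> Zp p \<Longrightarrow> bnd M q"
  unfolding bnd_def by (rule Zp_mult[OF Zp_of_nat])

lemma small_mult_bnd: "small (k + M) x \<Longrightarrow> bnd M y \<Longrightarrow> small k (x * y)"
proof -
  assume "small (k + M) x" "bnd M y"
  then obtain r where r: "r \<in> Zp p" "x = of_nat (p ^ (k + M)) * r" by (auto simp: small_def)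
  have "x * y = of_nat (p ^ k) * (r * (of_nat (p ^ M) * y))"
    using r by (simp add: power_add)
  moreover have "r * (of_nat (p ^ M) * y) \<in> Zp p" using r \<open>bnd M y\<close> unfolding bnd_def by blast
  ultimately show ?thesis unfolding small_def by blast
qed

lemma bnd_exists: "\<exists>M. bnd M q"
proof -
  obtain a b where ab: "q = of_int a / of_int b" "b > 0"
    by (metis quotient_of_denom_pos' quotient_of_div surj_pair snd_conv)
  define u where "u = nat b"
  have u0: "u \<noteq> 0" using ab by (simp add: u_def)
  obtain v where v: "u = p ^ multiplicity p u * v" "\<not> p dvd v"
    using multiplicity_decompose'[of u p] u0 p by (metis not_prime_unit)
  have v0: "v \<noteq> 0" using v u0 by (metis mult_0_right)
  have bu: "rat_of_int b = of_nat (p ^ multiplicity p u) * of_nat v"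
    using ab v unfolding u_def by (metis of_nat_mult of_int_of_nat_eq int_nat_eq less_imp_le not_le)
  have "of_nat (p ^ multiplicity p u) * q = of_int a / of_nat v"
    using ab(1) bu v0 p by (simp add: field_simps prime_gt_0_nat)
  also have "\<dots> \<in> Zp p" using Zp_div_nat[OF Zp_of_int v(2)] .
  finally show ?thesis unfolding bnd_def by blast
qed

lemma bnd_finite: "\<exists>M. \<forall>i<(N::nat). bnd M (f i)"
proof (induction N)
  case 0 show ?case by simp
next
  case (Suc N)
  then obtain M where M: "\<forall>i<N. bnd M (f i)" by blast
  obtain M' where M': "bnd M' (f N)" using bnd_exists by blast
  have "\<forall>i<Suc N. bnd (max M M') (f i)"
    using M M' bnd_mono by (metis less_Suc_eq max.cobounded1 max.cobounded2)
  thus ?case by blast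
qed


end

context padic begin

definition conv :: "rat fps \<Rightarrow> rat \<Rightarrow> bool" where
  "conv c v \<longleftrightarrow> (\<forall>k. \<forall>\<^sub>F N in sequentially. small k ((\<Sum>i\<le>N. c $ i) - v))"

lemma conv_null:
  assumes "conv c v" shows "\<forall>\<^sub>F i in sequentially. small k (c $ i)"
proof -
  obtain N0 where N0: "\<And>N. N \<ge> N0 \<Longrightarrow> small k ((\<Sum>i\<le>N. c $ i) - v)"
    using assms unfolding conv_def eventually_sequentially by blast
  have "small k (c $ i)" if "i \<ge> Suc N0" for i
  proof -
    obtain N where N: "i = Suc N" "N \<ge> N0" using \<open>i \<ge> Suc N0\<close> by (cases i) auto
    have "c $ i = ((\<Sum>j\<le>Suc N. c $ j) - v) - ((\<Sum>j\<le>N. c $ j) - v)" using N by simp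
    thus ?thesis using small_diff[OF N0[of "Suc N"] N0[of N]] N by simp
  qed
  thus ?thesis unfolding eventually_sequentially by blast
qed

lemma conv_bounded:
  assumes "conv c v" shows "\<exists>M. \<forall>i. bnd M (c $ i)"
proof -
  obtain N0 where N0: "\<And>i. i \<ge> N0 \<Longrightarrow> small 0 (c $ i)"
    using conv_null[OF assms, of 0] unfolding eventually_sequentially by blast
  obtain M where M: "\<forall>i<N0. bnd M (c $ i)" using bnd_finite by blast
  have "bnd M (c $ i)" for i
    using M N0[of i] bnd_Zp small_0_iff by (cases "i < N0") auto
  thus ?thesis by blast
qed

lemma conv_add: "conv c u \<Longrightarrow> conv d v \<Longrightarrow> conv (c + d) (u + v)"
  unfolding conv_def
proof (intro allI)
  fix k assume a: "\<forall>k. \<forall>\<^sub>F N in sequentially. small k ((\<Sum>i\<le>N. c $ i) - u)"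
    "\<forall>k. \<forall>\<^sub>F N in sequentially. small k ((\<Sum>i\<le>N. d $ i) - v)"
  show "\<forall>\<^sub>F N in sequentially. small k ((\<Sum>i\<le>N. (c + d) $ i) - (u + v))"
    using eventually_conj[OF a(1)[rule_format, of k] a(2)[rule_format, of k]]
  proof eventually_elim
    case (elim N)
    have eq: "(\<Sum>i\<le>N. (c + d) $ i) - (u + v) = ((\<Sum>i\<le>N. c $ i) - u) + ((\<Sum>i\<le>N. d $ i) - v)"
      by (simp add: sum.distrib)
    show ?case unfolding eq using small_add elim by blast
  qed
qed

lemma conv_uminus: "conv c u \<Longrightarrow> conv (- c) (- u)"
  unfolding conv_def
proof (intro allI)
  fix k assume a: "\<forall>k. \<forall>\<^sub>F N in sequentially. small k ((\<Sum>i\<le>N. c $ i) - u)"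
  show "\<forall>\<^sub>F N in sequentially. small k ((\<Sum>i\<le>N. (- c) $ i) - (- u))"
    using a[rule_format, of k]
  proof eventually_elim
    case (elim N)
    have eq: "(\<Sum>i\<le>N. (- c) $ i) - (- u) = - ((\<Sum>i\<le>N. c $ i) - u)"
      by (simp add: sum_negf)
    show ?case unfolding eq using small_uminus elim by blast
  qed
qed

lemma conv_diff: "conv c u \<Longrightarrow> conv d v \<Longrightarrow> conv (c - d) (u - v)"
  using conv_add[of c u "-d" "-v"] conv_uminus[of d v] by simp

lemma conv_const: "conv (fps_const a) a"
  unfolding conv_def by (auto simp: sum.atMost_shift)

lemma conv_zero: "conv 0 0"
  using conv_const[of 0] by simp

lemma conv_scale: assumes "conv c u" shows "conv (fps_const r * c) (r * u)"
  unfolding conv_def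
proof (intro allI)
  fix k
  obtain M where M: "bnd M r" using bnd_exists by blast
  have "\<forall>\<^sub>F N in sequentially. small (k + M) ((\<Sum>i\<le>N. c $ i) - u)"
    using assms unfolding conv_def by blast
  thus "\<forall>\<^sub>F N in sequentially. small k ((\<Sum>i\<le>N. (fps_const r * c) $ i) - r * u)"
  proof eventually_elim
    case (elim N)
    have "(\<Sum>i\<le>N. (fps_const r * c) $ i) = r * (\<Sum>i\<le>N. c $ i)"
      by (simp add: sum_distrib_left)
    hence "(\<Sum>i\<le>N. (fps_const r * c) $ i) - r * u = ((\<Sum>i\<le>N. c $ i) - u) * r"
      by (simp add: algebra_simps)
    thus ?case using small_mult_bnd[OF elim M] by simp
  qed
qed

lemma conv_sum: "(\<And>x. x \<in> A \<Longrightarrow> conv (f x) (g x)) \<Longrightarrow> conv (sum f A) (sum g A)"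
proof (induction A rule: infinite_finite_induct)
  case (insert x F) thus ?case using conv_add by simp
qed (auto intro: conv_zero)

lemma cauchy_partial:
  "(\<Sum>n\<le>N. (c * d :: rat fps) $ n) = (\<Sum>i\<le>N. c $ i * (\<Sum>j\<le>N - i. d $ j))"
proof (induction N)
  case 0 thus ?case by (simp add: fps_mult_nth)
next
  case (Suc N)
  have "(\<Sum>i\<le>Suc N. c $ i * (\<Sum>j\<le>Suc N - i. d $ j))
       = (\<Sum>i\<le>N. c $ i * (\<Sum>j\<le>Suc N - i. d $ j)) + c $ Suc N * d $ 0" by simp
  also have "(\<Sum>i\<le>N. c $ i * (\<Sum>j\<le>Suc N - i. d $ j))
       = (\<Sum>i\<le>N. c $ i * (\<Sum>j\<le>N - i. d $ j)) + (\<Sum>i\<le>N. c $ i * d $ (Suc N - i))"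
    by (subst sum.distrib[symmetric], intro sum.cong) (auto simp: Suc_diff_le algebra_simps)
  finally show ?case using Suc
    by (simp add: fps_mult_nth atLeast0AtMost)
qed

lemma conv_mult:
  assumes cu: "conv c u" and dv: "conv d v"
  shows "conv (c * d) (u * v)"
  unfolding conv_def
proof (intro allI)
  fix k
  obtain M1 where M1: "\<And>i. bnd M1 (c $ i)" using conv_bounded[OF cu] by blast
  obtain M2 where M2: "\<And>i. bnd M2 (d $ i)" using conv_bounded[OF dv] by blast
  obtain M3 where M3: "bnd M3 v" using bnd_exists by blast
  define M where "M = max M1 (max M2 M3)"
  have bc: "bnd M (c $ i)" for i using M1[of i] bnd_mono M_def by auto
  have bd: "bnd M (d $ i)" for i using M2[of i] bnd_mono M_def by auto
  have bv: "bnd M v" using M3 bnd_mono M_def by auto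
  have bD: "bnd M ((\<Sum>j\<le>N. d $ j) - v)" for N
    by (intro bnd_diff bnd_sum bd bv)
  obtain N1 where N1: "\<And>N. N \<ge> N1 \<Longrightarrow> small (k + M) ((\<Sum>j\<le>N. d $ j) - v)"
    using dv unfolding conv_def eventually_sequentially by blast
  obtain N2 where N2: "\<And>i. i \<ge> N2 \<Longrightarrow> small (k + M) (c $ i)"
    using conv_null[OF cu, of "k + M"] unfolding eventually_sequentially by blast
  obtain N3 where N3: "\<And>N. N \<ge> N3 \<Longrightarrow> small (k + M) ((\<Sum>j\<le>N. c $ j) - u)"
    using cu unfolding conv_def eventually_sequentially by blast
  have "small k ((\<Sum>n\<le>N. (c * d) $ n) - u * v)" if N: "N \<ge> N1 + N2 + N3" for N
  proof -
    have eq: "(\<Sum>n\<le>N. (c * d) $ n) - u * v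
        = (\<Sum>i\<le>N. c $ i * ((\<Sum>j\<le>N - i. d $ j) - v)) + ((\<Sum>j\<le>N. c $ j) - u) * v"
      unfolding cauchy_partial by (simp add: right_diff_distrib sum_subtractf sum_distrib_right sum_distrib_left mult.commute mult.left_commute)
    have "small k (c $ i * ((\<Sum>j\<le>N - i. d $ j) - v))" for i
    proof (cases "i \<ge> N2")
      case True
      thus ?thesis using small_mult_bnd[OF N2[OF True] bD] by simp
    next
      case False
      hence "N - i \<ge> N1" using N by auto
      thus ?thesis using small_mult_bnd[OF N1 bc] by (simp add: mult.commute)
    qed
    moreover have "small k (((\<Sum>j\<le>N. c $ j) - u) * v)"
      using small_mult_bnd[OF N3 bv] N by simp
    ultimately show ?thesis unfolding eq by (intro small_add small_sum) auto
  qed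
  thus "\<forall>\<^sub>F N in sequentially. small k ((\<Sum>n\<le>N. (c * d) $ n) - u * v)"
    unfolding eventually_sequentially by blast
qed

definition col :: "rat fps fps \<Rightarrow> nat \<Rightarrow> rat fps" where
  "col T j = Abs_fps (\<lambda>i. T $ i $ j)"

lemma col_nth [simp]: "col T j $ i = T $ i $ j" by (simp add: col_def)

lemma col_add [simp]: "col (S + T) j = col S j + col T j" by (simp add: col_def fps_eq_iff)
lemma col_diff [simp]: "col (S - T) j = col S j - col T j" by (simp add: col_def fps_eq_iff)
lemma col_uminus [simp]: "col (- T) j = - col T j" by (simp add: col_def fps_eq_iff)
lemma col_sum: "col (sum f A) j = (\<Sum>x\<in>A. col (f x) j)"
  by (simp add: col_def fps_eq_iff fps_sum_nth)
lemma col_const: "col (fps_const a) j = fps_const (a $ j)"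
  by (simp add: col_def fps_eq_iff fps_nth_fps_const)
lemma col_scale: "col (fps_const (fps_const r) * T) j = fps_const r * col T j"
  by (simp add: col_def fps_eq_iff)

lemma col_mult: "col (S * T) j = (\<Sum>c\<le>j. col S c * col T (j - c))"
proof (rule fps_ext)
  fix i
  have "col (S * T) j $ i = (\<Sum>a=0..i. \<Sum>c=0..j. S $ a $ c * T $ (i - a) $ (j - c))"
    by (simp add: fps_mult_nth fps_sum_nth)
  also have "\<dots> = (\<Sum>c=0..j. \<Sum>a=0..i. S $ a $ c * T $ (i - a) $ (j - c))"
    by (rule sum.swap)
  also have "\<dots> = (\<Sum>c\<le>j. col S c * col T (j - c)) $ i"
    by (simp add: fps_mult_nth fps_sum_nth atLeast0AtMost)
  finally show "col (S * T) j $ i = (\<Sum>c\<le>j. col S c * col T (j - c)) $ i" .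
qed

definition tate :: "rat fps fps \<Rightarrow> rat fps \<Rightarrow> bool" where
  "tate T V \<longleftrightarrow> (\<forall>j. conv (col T j) (V $ j))"

lemma tate_add: "tate S V \<Longrightarrow> tate T W \<Longrightarrow> tate (S + T) (V + W)"
  unfolding tate_def using conv_add by simp
lemma tate_diff: "tate S V \<Longrightarrow> tate T W \<Longrightarrow> tate (S - T) (V - W)"
  unfolding tate_def using conv_diff by simp
lemma tate_const: "tate (fps_const a) a"
  unfolding tate_def col_const using conv_const by simp
lemma tate_scale: "tate T V \<Longrightarrow> tate (fps_const (fps_const r) * T) (fps_const r * V)"
  unfolding tate_def col_scale using conv_scale by simp
lemma tate_sum: "(\<And>x. x \<in> A \<Longrightarrow> tate (f x) (g x)) \<Longrightarrow> tate (sum f A) (sum g A)"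
  unfolding tate_def col_sum fps_sum_nth by (auto intro!: conv_sum)
lemma tate_mult: "tate S V \<Longrightarrow> tate T W \<Longrightarrow> tate (S * T) (V * W)"
  unfolding tate_def col_mult
  by (auto simp: fps_mult_nth atLeast0AtMost intro!: conv_sum conv_mult)
lemma tate_power: "tate T V \<Longrightarrow> tate (T ^ n) (V ^ n)"
proof (induction n)
  case 0 thus ?case using tate_const[of 1] by simp
next
  case (Suc n) thus ?case using tate_mult by simp
qed

end

lemma binom_rec: "Suc k * (N choose Suc k) = (N - k) * (N choose k)"
proof (cases N)
  case 0 thus ?thesis by simp
next
  case (Suc N')
  thus ?thesis using Suc_times_binomial[of k N'] binomial_absorb_comp[of N k] by simp
qed

lemma zvar_pow_nth: "(zvar ^ n) $ j = (-1) ^ j * of_nat (n choose j)"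
proof (induction n arbitrary: j)
  case 0 thus ?case by simp
next
  case (Suc n)
  have "zvar ^ Suc n = zvar ^ n - fps_X * zvar ^ n" by (simp add: zvar_def algebra_simps)
  hence "(zvar ^ Suc n) $ j = (zvar ^ n) $ j - (if j = 0 then 0 else (zvar ^ n) $ (j - 1))"
    by simp
  also have "\<dots> = (-1) ^ j * of_nat (Suc n choose j)"
    using Suc by (cases j) (auto simp: algebra_simps)
  finally show ?case .
qed

context padic begin

lemma p_gt1: "p > 1" using p prime_gt_1_nat by blast

lemma small_div_nat:
  assumes "small a x" "m \<ge> 1" "m < p ^ E" "E \<le> a"
  shows "small (a - E) (x / of_nat m)"
proof -
  obtain u where u: "m = p ^ multiplicity p m * u" "\<not> p dvd u"
    using multiplicity_decompose'[of m p] assms(2) p by (metis not_prime_unit not_one_le_zero)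
  define v where "v = multiplicity p m"
  have u0: "u \<noteq> 0" using u assms(2) by (metis mult_0_right not_one_le_zero)
  have "p ^ v \<le> m" using u u0 unfolding v_def by (metis dvd_imp_le dvd_triv_left assms(2) not_one_le_zero neq0_conv)
  hence "p ^ v < p ^ E" using assms(3) by linarith
  hence vE: "v < E" using power_less_imp_less_exp p_gt1 by blast
  obtain r where r: "r \<in> Zp p" "x = of_nat (p ^ a) * r" using assms(1) unfolding small_def by blast
  have "x / of_nat m = of_nat (p ^ (a - E)) * (of_nat (p ^ (E - v)) * r / of_nat u)"
  proof -
    have "a = (a - E) + (E - v) + v" using vE assms(4) by simp
    hence "(of_nat (p ^ a) :: rat) = of_nat (p ^ (a - E)) * of_nat (p ^ (E - v)) * of_nat (p ^ v)"
      by (metis power_add of_nat_mult)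
    moreover have "(of_nat m :: rat) = of_nat (p ^ v) * of_nat u" using u unfolding v_def by (metis of_nat_mult)
    ultimately show ?thesis using r(2) u0 p_gt1 by (simp add: field_simps)
  qed
  moreover have "of_nat (p ^ (E - v)) * r / of_nat u \<in> Zp p"
    by (rule Zp_div_nat[OF Zp_mult[OF Zp_of_nat r(1)] u(2)])
  ultimately show ?thesis unfolding small_def by blast
qed

lemma binom_est:
  assumes "E \<le> K" "m < p ^ E"
  shows "small (K - E) (1 - (-1) ^ m * of_nat ((p ^ K - 1) choose m))"
  using assms(2)
proof (induction m)
  case 0 thus ?case by simp
next
  case (Suc m)
  define n where "n = p ^ K"
  have nE: "p ^ E \<le> n" unfolding n_def using assms(1) p_gt1 by (simp add: power_increasing)
  define c where "c = ((-1) ^ m * of_nat ((n - 1) choose m) :: rat)"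
  have IH: "small (K - E) (1 - c)" using Suc c_def n_def by simp
  have mn: "Suc m < n" using Suc nE by linarith
  have "of_nat (Suc m) * of_nat ((n - 1) choose Suc m) = (of_nat (n - 1 - m) * of_nat ((n - 1) choose m) :: rat)"
    using binom_rec[of m "n - 1"] by (metis of_nat_mult)
  also have "(of_nat (n - 1 - m) :: rat) = of_nat n - of_nat (Suc m)" using mn by (simp add: of_nat_diff)
  finally have eq: "of_nat ((n - 1) choose Suc m) = (of_nat n - of_nat (Suc m)) * of_nat ((n - 1) choose m) / (of_nat (Suc m) :: rat)"
    by (simp add: field_simps del: of_nat_Suc)
  have eq2: "1 - (-1) ^ Suc m * of_nat ((n - 1) choose Suc m) = (1 - c) + c * (of_nat n / of_nat (Suc m))"
    unfolding eq c_def by (simp add: field_simps del: of_nat_Suc)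
  have sm: "small (K - E) (c * (of_nat n / of_nat (Suc m)))"
  proof -
    have "small (K + 0) (of_nat n)" unfolding n_def using small_pow[of 1 K] by simp
    hence "small (K - E) (of_nat n / of_nat (Suc m))"
      using small_div_nat[of K "of_nat n" "Suc m" E] Suc(2) assms(1) by simp
    moreover have "c \<in> Zp p" unfolding c_def by (intro Zp_mult Zp_power Zp_of_nat) auto
    ultimately have "small (K - E) ((of_nat n / of_nat (Suc m)) * c)" by (rule small_mult_Zp)
    thus ?thesis by (simp only: mult.commute)
  qed
  show ?case unfolding n_def[symmetric] eq2 by (rule small_add[OF IH sm])
qed

definition Ufps :: "nat \<Rightarrow> rat fps" where
  "Ufps K = fps_const (1 / of_nat (p ^ K)) * (zvar ^ (p ^ K) - 1)"

lemma Ufps_nth: "Ufps K $ j = (if j = 0 then 0 else (-1) ^ j * of_nat ((p ^ K) choose j) / of_nat (p ^ K))"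
  by (simp add: Ufps_def zvar_pow_nth)

lemma Ufps_est:
  assumes "j \<ge> 1"
  shows "\<exists>K0. \<forall>K\<ge>K0. small k (Ufps K $ j + 1 / of_nat j)"
proof -
  have "j < 2 ^ j" by simp
  also have "(2::nat) ^ j \<le> p ^ j" using p_gt1 by (intro power_mono) auto
  finally have jE: "j < p ^ j" .
  have "small k (Ufps K $ j + 1 / of_nat j)" if K: "K \<ge> k + 2 * j" for K
  proof -
    define n where "n = p ^ K"
    have n1: "n \<ge> 1" unfolding n_def using p_gt1 by simp
    have "of_nat j * of_nat (n choose j) = (of_nat n * of_nat ((n - 1) choose (j - 1)) :: rat)"
      using times_binomial_minus1_eq[of j n] assms by (metis of_nat_mult not_one_le_zero neq0_conv)
    hence eq1: "(of_nat (n choose j) :: rat) / of_nat n = of_nat ((n - 1) choose (j - 1)) / of_nat j"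
      using n1 assms by (simp add: field_simps)
    have sj: "(-1 :: rat) ^ j = - ((-1) ^ (j - 1))" using assms by (cases j) auto
    have "Ufps K $ j = (-1) ^ j * ((of_nat (n choose j) :: rat) / of_nat n)"
      unfolding Ufps_nth n_def using assms by simp
    also have "\<dots> = - ((-1) ^ (j - 1) * of_nat ((n - 1) choose (j - 1))) / of_nat j"
      unfolding eq1 sj by simp
    finally have "Ufps K $ j + 1 / of_nat j = (1 - (-1) ^ (j - 1) * of_nat ((n - 1) choose (j - 1))) / of_nat j"
      by (simp add: diff_divide_distrib)
    moreover have "small (K - j) (1 - (-1) ^ (j - 1) * of_nat ((n - 1) choose (j - 1)))"
      unfolding n_def using binom_est[of j K "j - 1"] K jE by simp
    hence "small (K - j - j) ((1 - (-1) ^ (j - 1) * of_nat ((n - 1) choose (j - 1))) / of_nat j)"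
      using small_div_nat[of "K - j" _ j j] assms jE K by simp
    ultimately show ?thesis using small_mono K by simp
  qed
  thus ?thesis by blast
qed

end

lemma subst_tm_nth: "subst_tm a c m $ n = (if m dvd n then fps_const (a $ (n div m)) * c ^ (n div m) else 0)"
  by (simp add: subst_tm_def)

context padic begin

abbreviation "L \<equiv> AH_log p"

lemma pow_inj: "p ^ i = p ^ j \<Longrightarrow> i = j"
  using p_gt1 by (simp add: power_inject_exp)

lemma L_pow: "L $ (p ^ i) = 1 / of_nat (p ^ i)"
  by (auto simp: AH_log_def)

lemma L_notpow: "\<not> (\<exists>i. n = p ^ i) \<Longrightarrow> L $ n = 0"
  by (auto simp: AH_log_def)

definition Aser :: "rat fps fps" where
  "Aser = subst_tm L zvar 1 + subst_tm L 1 p - subst_tm L 1 1 - subst_tm L zvar p"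

lemma A_nth: "Aser $ n = fps_const (L $ n) * (zvar ^ n - 1)
   + (if p dvd n then fps_const (L $ (n div p)) * (1 - zvar ^ (n div p)) else 0)"
  by (simp add: Aser_def subst_tm_nth algebra_simps)

lemma A_nth_notpow: assumes "\<not> (\<exists>i. n = p ^ i)" shows "Aser $ n = 0"
proof -
  have "L $ n = 0" using L_notpow assms by blast
  moreover have "p dvd n \<Longrightarrow> L $ (n div p) = 0"
  proof (rule L_notpow, rule notI)
    assume "p dvd n" "\<exists>i. n div p = p ^ i"
    then obtain i where "n div p = p ^ i" by blast
    hence "n = p ^ Suc i" using \<open>p dvd n\<close> by (metis dvd_mult_div_cancel power_Suc)
    thus False using assms by blast
  qed
  ultimately show ?thesis unfolding A_nth by simp
qed

lemma A_nth_0: "Aser $ 0 = 0"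
proof -
  have "\<not> (\<exists>i. 0 = p ^ i)" using p_gt1 by simp
  thus ?thesis by (rule A_nth_notpow)
qed

lemma A_nth_1: "Aser $ 1 = Ufps 0"
proof -
  have "\<not> p dvd 1" using p_gt1 by simp
  moreover have "L $ 1 = 1" using L_pow[of 0] by simp
  ultimately show ?thesis unfolding A_nth Ufps_def by simp
qed

lemma A_nth_pow: "Aser $ (p ^ Suc K) = Ufps (Suc K) - Ufps K"
proof -
  have "p dvd p ^ Suc K" by simp
  moreover have dv: "p ^ Suc K div p = p ^ K" using p_gt1 by simp
  ultimately show ?thesis unfolding A_nth Ufps_def dv L_pow
    by (simp add: algebra_simps del: power_Suc of_nat_power)
qed

lemma A_col0: "Aser $ n $ 0 = 0"
  unfolding A_nth by (simp add: zvar_def fps_power_zeroth)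

lemma A_partial:
  assumes "N \<ge> 1"
  shows "\<exists>K. p ^ K \<le> N \<and> N < p ^ Suc K \<and> (\<Sum>i\<le>N. Aser $ i) = Ufps K"
  using assms
proof (induction N rule: dec_induct)
  case base
  have "(\<Sum>i\<le>1. Aser $ i) = Ufps 0" using A_nth_0 A_nth_1 by simp
  thus ?case using p_gt1 by (intro exI[of _ 0]) auto
next
  case (step N)
  then obtain K where K: "p ^ K \<le> N" "N < p ^ Suc K" "(\<Sum>i\<le>N. Aser $ i) = Ufps K" by blast
  show ?case
  proof (cases "Suc N = p ^ Suc K")
    case True
    have "(\<Sum>i\<le>Suc N. Aser $ i) = Ufps K + Aser $ Suc N" using K(3) by simp
    also have "Aser $ Suc N = Ufps (Suc K) - Ufps K" unfolding True by (rule A_nth_pow)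
    finally have "(\<Sum>i\<le>Suc N. Aser $ i) = Ufps (Suc K)" by simp
    moreover have "Suc N < p ^ Suc (Suc K)" using True p_gt1 by simp
    ultimately show ?thesis using True by (intro exI[of _ "Suc K"]) auto
  next
    case False
    have "\<not> (\<exists>i. Suc N = p ^ i)"
    proof
      assume "\<exists>i. Suc N = p ^ i"
      then obtain i where i: "Suc N = p ^ i" by blast
      have "p ^ K < p ^ i" using K(1) i by simp
      hence "K < i" using power_less_imp_less_exp p_gt1 by blast
      moreover have "p ^ i < p ^ Suc K" using False K(2) i by simp
      hence "i < Suc K" using power_less_imp_less_exp p_gt1 by blast
      ultimately show False by simp
    qed
    hence "Aser $ Suc N = 0" by (rule A_nth_notpow)
    moreover have "Suc N < p ^ Suc K" using False K(2) by simp
    ultimately show ?thesis using K by (intro exI[of _ K]) auto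
  qed
qed

definition Lam :: "rat fps" where
  "Lam = Abs_fps (\<lambda>j. if j = 0 then 0 else - 1 / of_nat j)"

lemma tate_A: "tate Aser Lam"
  unfolding tate_def conv_def
proof (intro allI)
  fix j k
  show "\<forall>\<^sub>F N in sequentially. small k ((\<Sum>i\<le>N. col Aser j $ i) - Lam $ j)"
  proof (cases "j = 0")
    case True
    thus ?thesis by (simp add: A_col0 Lam_def)
  next
    case False
    then obtain K0 where K0: "\<And>K. K \<ge> K0 \<Longrightarrow> small k (Ufps K $ j + 1 / of_nat j)"
      using Ufps_est[of j k] by auto
    have "small k ((\<Sum>i\<le>N. col Aser j $ i) - Lam $ j)" if N: "N \<ge> p ^ K0" for N
    proof -
      have "N \<ge> 1" using N p_gt1 by (meson le_trans one_le_power less_imp_le)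
      then obtain K where K: "p ^ K \<le> N" "N < p ^ Suc K" "(\<Sum>i\<le>N. Aser $ i) = Ufps K"
        using A_partial by blast
      have "p ^ K0 < p ^ Suc K" using N K by simp
      hence "K0 < Suc K" using power_less_imp_less_exp p_gt1 by blast
      moreover have "(\<Sum>i\<le>N. col Aser j $ i) = Ufps K $ j"
        using K(3) by (simp add: fps_sum_nth[symmetric])
      ultimately show ?thesis using K0[of K] False by (simp add: Lam_def)
    qed
    thus ?thesis unfolding eventually_sequentially by blast
  qed
qed

end

lemma ode_unique:
  fixes Y W C :: "'a::{idom, semiring_char_0} fps"
  assumes "fps_deriv Y = C * Y" "fps_deriv W = C * W" "Y $ 0 = W $ 0"
  shows "Y = W"
proof (rule fps_ext)
  fix n show "Y $ n = W $ n"
  proof (induction n rule: less_induct)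
    case (less n)
    show ?case
    proof (cases n)
      case 0 thus ?thesis using assms(3) by simp
    next
      case (Suc m)
      have "of_nat (Suc m) * Y $ Suc m = (C * Y) $ m"
        using arg_cong[OF assms(1), of "\<lambda>f. f $ m"] by simp
      also have "\<dots> = (C * W) $ m"
        unfolding fps_mult_nth using less Suc by (intro sum.cong) auto
      also have "\<dots> = of_nat (Suc m) * W $ Suc m"
        using arg_cong[OF assms(2), of "\<lambda>f. f $ m"] by simp
      finally show ?thesis using Suc by (simp del: of_nat_Suc)
    qed
  qed
qed

definition EN :: "rat fps fps \<Rightarrow> nat \<Rightarrow> rat fps fps" where
  "EN A N = (\<Sum>m\<le>N. fps_const (fps_const (1 / fact m)) * A ^ m)"

definition ExpT :: "rat fps fps \<Rightarrow> rat fps fps" where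
  "ExpT A = Abs_fps (\<lambda>i. Abs_fps (\<lambda>j. EN A j $ i $ j))"

lemma EN_nth: "EN A N $ i $ j = (\<Sum>m\<le>N. (A ^ m) $ i $ j / fact m)"
  by (simp add: EN_def fps_sum_nth)

lemma vanish:
  assumes hA: "\<And>n. A $ n $ 0 = 0"
  shows "d < m \<Longrightarrow> (A ^ m) $ i $ d = 0"
proof (induction m arbitrary: i d)
  case 0 thus ?case by simp
next
  case (Suc m)
  have "(A ^ Suc m) $ i $ d = (\<Sum>a=0..i. \<Sum>c=0..d. A $ a $ c * (A ^ m) $ (i - a) $ (d - c))"
    by (simp add: fps_mult_nth fps_sum_nth)
  also have "\<dots> = 0"
  proof (intro sum.neutral ballI)
    fix a c assume "c \<in> {0..d}"
    show "A $ a $ c * (A ^ m) $ (i - a) $ (d - c) = 0"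
    proof (cases "c = 0")
      case True thus ?thesis using hA by simp
    next
      case False
      hence "d - c < m" using Suc.prems \<open>c \<in> {0..d}\<close> by auto
      thus ?thesis using Suc.IH by simp
    qed
  qed
  finally show ?case .
qed

lemma EN_stable:
  assumes hA: "\<And>n. A $ n $ 0 = 0" and "N \<ge> j"
  shows "EN A N $ i $ j = EN A j $ i $ j"
  unfolding EN_nth
proof (rule sum.mono_neutral_right)
  show "\<forall>m\<in>{..N} - {..j}. (A ^ m) $ i $ j / fact m = 0"
    using vanish[OF hA] by auto
qed (use assms in auto)

lemma ExpT_nth: "ExpT A $ i $ j = EN A j $ i $ j"
  by (simp add: ExpT_def)

lemma ExpT_nth': "(\<And>n. A $ n $ 0 = 0) \<Longrightarrow> N \<ge> j \<Longrightarrow> ExpT A $ i $ j = EN A N $ i $ j"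
  using EN_stable ExpT_nth by metis

lemma mult_local:
  assumes "\<And>b d. d \<le> j \<Longrightarrow> X $ b $ d = Y $ b $ d"
  shows "(Z * X) $ i $ j = (Z * Y) $ i $ j"
  unfolding fps_mult_nth fps_sum_nth using assms by (intro sum.cong refl) auto

lemma deriv_EN: "fps_deriv (EN A (Suc N)) = fps_deriv A * EN A N"
proof -
  have "fps_deriv (EN A (Suc N)) = (\<Sum>m\<le>Suc N. fps_const (fps_const (1 / fact m)) * fps_deriv (A ^ m))"
    by (simp add: EN_def fps_deriv_sum)
  also have "\<dots> = (\<Sum>m\<le>N. fps_const (fps_const (1 / fact (Suc m))) * fps_deriv (A ^ Suc m))"
    by (subst sum.atMost_Suc_shift) simp
  also have "\<dots> = (\<Sum>m\<le>N. fps_deriv A * (fps_const (fps_const (1 / fact m)) * A ^ m))"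
  proof (intro sum.cong refl)
    fix m
    have e: "fps_const (fps_const (1 / fact (Suc m))) * fps_const (of_nat (Suc m)) = (fps_const (fps_const (1 / fact m)) :: rat fps fps)"
      by (simp add: fps_of_nat[symmetric] del: of_nat_Suc)
    show "fps_const (fps_const (1 / fact (Suc m))) * fps_deriv (A ^ Suc m) = fps_deriv A * (fps_const (fps_const (1 / fact m)) * A ^ m)"
      unfolding fps_deriv_power diff_Suc_1 by (simp only: e[symmetric] mult_ac)
  qed
  also have "\<dots> = fps_deriv A * EN A N" by (simp add: EN_def sum_distrib_left)
  finally show ?thesis .
qed

lemma nat_mult_nth: "(of_nat n * (x :: rat fps)) $ j = of_nat n * x $ j"
  by (simp add: fps_of_nat[symmetric])

lemma deriv_ExpT:
  assumes hA: "\<And>n. A $ n $ 0 = 0"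
  shows "fps_deriv (ExpT A) = fps_deriv A * ExpT A"
proof (rule fps_ext, rule fps_ext)
  fix i j
  have "fps_deriv (ExpT A) $ i $ j = of_nat (Suc i) * EN A (Suc j) $ Suc i $ j"
    using ExpT_nth'[OF hA, of j "Suc j"] by (simp add: nat_mult_nth del: of_nat_Suc)
  also have "\<dots> = fps_deriv (EN A (Suc j)) $ i $ j" by (simp add: nat_mult_nth del: of_nat_Suc)
  also have "\<dots> = (fps_deriv A * EN A j) $ i $ j" by (simp add: deriv_EN)
  also have "\<dots> = (fps_deriv A * ExpT A) $ i $ j"
    using ExpT_nth'[OF hA] by (intro mult_local) simp
  finally show "fps_deriv (ExpT A) $ i $ j = (fps_deriv A * ExpT A) $ i $ j" .
qed

lemma ExpT_0:
  assumes "A $ 0 = 0"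
  shows "ExpT A $ 0 = 1"
proof (rule fps_ext)
  fix j
  have "ExpT A $ 0 $ j = (\<Sum>m\<le>j. (A ^ m) $ 0 $ j / fact m)" by (simp add: ExpT_nth EN_nth)
  also have "\<dots> = (\<Sum>m\<le>j. (if m = 0 then 1 $ j else 0))"
    using assms by (intro sum.cong refl) (auto simp: fps_power_zeroth power_0_left)
  also have "\<dots> = 1 $ j" by (simp add: sum.delta)
  finally show "ExpT A $ 0 $ j = 1 $ j" by simp
qed

context padic begin

lemma tate_ExpT:
  assumes "tate A V"
  shows "tate (ExpT A) (fps_exp 1 oo V)"
  unfolding tate_def
proof
  fix j
  have "tate (EN A j) (\<Sum>m\<le>j. fps_const (1 / fact m) * V ^ m)"
    unfolding EN_def by (intro tate_sum tate_scale tate_power assms)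
  hence "conv (col (EN A j) j) ((\<Sum>m\<le>j. fps_const (1 / fact m) * V ^ m) $ j)"
    unfolding tate_def by blast
  moreover have "col (EN A j) j = col (ExpT A) j" by (simp add: fps_eq_iff ExpT_nth)
  moreover have "(\<Sum>m\<le>j. fps_const (1 / fact m) * V ^ m) $ j = (fps_exp 1 oo V) $ j"
    by (simp add: fps_compose_nth fps_sum_nth atLeast0AtMost)
  ultimately show "conv (col (ExpT A) j) ((fps_exp 1 oo V) $ j)" by simp
qed

lemma exp_Lam: "fps_exp 1 oo Lam = zvar"
proof -
  define Lm where "Lm = (Lam :: rat fps)"
  have Lm0: "Lm $ 0 = 0" by (simp add: Lm_def Lam_def)
  define C where "C = fps_deriv Lm"
  have Cn: "C $ n = -1" for n by (simp add: C_def Lm_def Lam_def del: of_nat_Suc)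
  have "fps_deriv (fps_exp 1 oo Lm) = C * (fps_exp 1 oo Lm)"
    unfolding C_def fps_compose_deriv[OF Lm0] fps_exp_deriv fps_const_1_eq_1 mult_1 by (rule mult.commute)
  moreover have "fps_deriv zvar = C * zvar"
  proof (rule fps_ext)
    fix n
    have "C * zvar = C - fps_X * C" by (simp add: zvar_def right_diff_distrib mult.commute)
    thus "fps_deriv zvar $ n = (C * zvar) $ n"
      by (cases n) (simp_all add: zvar_def Cn)
  qed
  ultimately show ?thesis unfolding Lm_def[symmetric]
    by (rule ode_unique) (simp add: zvar_def)
qed

lemma tate_ExpT_A: "tate (ExpT Aser) zvar"
  using tate_ExpT[OF tate_A] exp_Lam by simp

end

definition lift :: "'a::zero fps \<Rightarrow> 'a fps fps" where
  "lift a = Abs_fps (\<lambda>n. fps_const (a $ n))"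

lemma lift_nth [simp]: "lift a $ n = fps_const (a $ n)" by (simp add: lift_def)

lemma lift_mult: "lift (a * b) = lift a * lift (b :: 'a::comm_ring_1 fps)"
proof (rule fps_ext, rule fps_ext)
  fix n j
  show "lift (a * b) $ n $ j = (lift a * lift b) $ n $ j"
    by (cases "j = 0") (simp_all add: fps_mult_nth fps_sum_nth)
qed

lemma lift_deriv: "fps_deriv (lift a) = lift (fps_deriv (a :: 'a::comm_ring_1 fps))"
  by (rule fps_ext) (simp add: fps_of_nat[symmetric] del: of_nat_Suc)

lemma compose_mono_nth:
  fixes a :: "'a::comm_ring_1 fps"
  assumes m: "m \<ge> 1"
  shows "(a oo (fps_const c * fps_X ^ m)) $ n = (if m dvd n then a $ (n div m) * c ^ (n div m) else 0)"
proof -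
  have pw: "(fps_const c * fps_X ^ m) ^ i = fps_const (c ^ i) * fps_X ^ (m * i)" for i
    by (simp add: power_mult_distrib power_mult)
  have "(a oo (fps_const c * fps_X ^ m)) $ n = (\<Sum>i=0..n. if i = n div m \<and> m dvd n then a $ i * c ^ i else 0)"
    unfolding fps_compose_nth pw
  proof (intro sum.cong refl)
    fix i assume "i \<in> {0..n}"
    have "(n = m * i) \<longleftrightarrow> (i = n div m \<and> m dvd n)" using m by auto
    thus "a $ i * (fps_const (c ^ i) * fps_X ^ (m * i)) $ n = (if i = n div m \<and> m dvd n then a $ i * c ^ i else 0)"
      by auto
  qed
  also have "\<dots> = (if m dvd n then a $ (n div m) * c ^ (n div m) else 0)"
    by (cases "m dvd n") (auto simp: sum.delta' div_le_dividend)
  finally show ?thesis .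
qed

lemma subst_eq: "m \<ge> 1 \<Longrightarrow> subst_tm a c m = lift a oo (fps_const c * fps_X ^ m)"
  by (rule fps_ext) (simp add: compose_mono_nth subst_tm_nth)

lemma subst_deriv:
  assumes "m \<ge> 1"
  shows "fps_deriv (subst_tm a c m) = (lift (fps_deriv a) oo (fps_const c * fps_X ^ m)) * fps_deriv (fps_const c * fps_X ^ m)"
proof -
  have b0: "(fps_const c * fps_X ^ m) $ 0 = 0" using assms by simp
  show ?thesis unfolding subst_eq[OF assms] fps_compose_deriv[OF b0] lift_deriv ..
qed

lemma subst_mult: "m \<ge> 1 \<Longrightarrow> subst_tm (a * b) c m = subst_tm a c m * subst_tm b c m"
  unfolding subst_eq lift_mult by (rule fps_compose_mult_distrib) simp

lemma subst_0: "subst_tm a c m $ 0 = fps_const (a $ 0)"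
  by (simp add: subst_tm_nth)

lemma subst_diff: "subst_tm (a - b) c m = subst_tm a c m - subst_tm b c m"
  by (rule fps_ext) (simp add: subst_tm_nth left_diff_distrib fps_const_sub[symmetric] del: fps_const_sub)

context padic begin

abbreviation "E \<equiv> artin_hasse p"

lemma L0: "L $ 0 = 0"
proof -
  have "\<not> (\<exists>i. 0 = p ^ i)" using p_gt1 by simp
  thus ?thesis by (rule L_notpow)
qed

lemma E_deriv: "fps_deriv E = fps_deriv L * E"
  unfolding artin_hasse_def fps_compose_deriv[OF L0] by (simp add: mult.commute)

lemma E0: "E $ 0 = 1" by (simp add: artin_hasse_def)

lemma subst_E_deriv:
  assumes "m \<ge> 1"
  shows "fps_deriv (subst_tm E c m) = fps_deriv (subst_tm L c m) * subst_tm E c m"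
proof -
  have b0: "(fps_const c * fps_X ^ m) $ 0 = 0" using assms by simp
  show ?thesis
    unfolding subst_deriv[OF assms]
    unfolding E_deriv lift_mult fps_compose_mult_distrib[OF b0] subst_eq[OF assms]
    by (simp add: mult_ac)
qed

lemma inv_right:
  fixes F :: "rat fps fps"
  assumes "F $ 0 = 1"
  shows "F * inverse F = 1"
proof -
  have i1: "inverse (1 :: rat fps) = 1" by (rule fps_inverse_one') simp
  have "inverse F = fps_right_inverse F (inverse (F $ 0))" by (simp add: fps_inverse_def)
  hence "inverse F = fps_right_inverse F 1" using assms i1 by simp
  thus ?thesis using fps_right_inverse[of F 1] assms by simp
qed

lemma f_eq: "f_AH p = ExpT Aser"
proof -
  define P where "P = subst_tm E zvar 1"
  define Q where "Q = subst_tm E 1 p"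
  define R where "R = subst_tm E 1 1"
  define S where "S = subst_tm E zvar p"
  define DP where "DP = fps_deriv (subst_tm L zvar 1)"
  define DQ where "DQ = fps_deriv (subst_tm L 1 p)"
  define DR where "DR = fps_deriv (subst_tm L 1 1)"
  define DS where "DS = fps_deriv (subst_tm L zvar p)"
  have p1: "p \<ge> 1" using p_gt1 by simp
  have dP: "fps_deriv P = DP * P" unfolding P_def DP_def by (rule subst_E_deriv) simp
  have dQ: "fps_deriv Q = DQ * Q" unfolding Q_def DQ_def by (rule subst_E_deriv[OF p1])
  have dR: "fps_deriv R = DR * R" unfolding R_def DR_def by (rule subst_E_deriv) simp
  have dS: "fps_deriv S = DS * S" unfolding S_def DS_def by (rule subst_E_deriv[OF p1])
  have dA: "fps_deriv Aser = DP + DQ - DR - DS"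
    unfolding Aser_def DP_def DQ_def DR_def DS_def by simp
  define X where "X = ExpT Aser"
  have dX: "fps_deriv X = fps_deriv Aser * X"
    unfolding X_def by (rule deriv_ExpT) (rule A_col0)
  have X0: "X $ 0 = 1" unfolding X_def by (rule ExpT_0) (rule A_nth_0)
  have c0: "P $ 0 = 1" "Q $ 0 = 1" "R $ 0 = 1" "S $ 0 = 1"
    unfolding P_def Q_def R_def S_def subst_0 E0 by simp_all
  have Y1: "fps_deriv (X * (R * S)) = (DP + DQ) * (X * (R * S))"
    by (simp add: dX dA dR dS algebra_simps)
  have Y2: "fps_deriv (P * Q) = (DP + DQ) * (P * Q)"
    by (simp add: dP dQ algebra_simps)
  have eq: "X * (R * S) = P * Q"
    by (rule ode_unique[OF Y1 Y2]) (simp add: X0 c0)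
  have inv: "(R * S) * inverse (R * S) = 1" by (rule inv_right) (simp add: c0)
  have "f_AH p = P * Q * inverse (R * S)"
    unfolding f_AH_def P_def Q_def R_def S_def by simp
  also have "\<dots> = X * ((R * S) * inverse (R * S))" unfolding eq[symmetric] by (simp add: mult_ac)
  also have "\<dots> = X" using inv by simp
  finally show ?thesis unfolding X_def .
qed

end

context padic begin

lemma fermat_int1: assumes "\<not> int p dvd b" shows "int p dvd b ^ (p - 1) - 1"
proof -
  define r where "r = nat (b mod int p)"
  have p0: "int p > 0" using p_gt1 by simp
  have br: "b mod int p = int r" unfolding r_def using p0 by simp
  have "\<not> p dvd r"
  proof
    assume "p dvd r"
    hence "int p dvd int r" by simp
    hence "int p dvd b mod int p" using br by simp
    thus False using assms by (simp add: dvd_mod_iff)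
  qed
  hence "[r ^ (p - 1) = 1] (mod p)" using fermat_theorem[OF p] by simp
  hence "r ^ (p - 1) mod p = 1 mod p" by (simp add: cong_def)
  hence "int (r ^ (p - 1)) mod int p = int 1 mod int p" by (metis of_nat_mod)
  hence "(int r) ^ (p - 1) mod int p = 1 mod int p" by simp
  hence "(b mod int p) ^ (p - 1) mod int p = 1 mod int p" using br by simp
  hence "b ^ (p - 1) mod int p = 1 mod int p" by (simp add: power_mod)
  thus ?thesis by (simp add: mod_eq_dvd_iff)
qed

lemma fermat_int2: "int p dvd a ^ p - a * b ^ (p - 1)" if "\<not> int p dvd b" for a b :: int
proof -
  have h: "a ^ p - a * b ^ (p - 1) = (a ^ p - a) - a * (b ^ (p - 1) - 1)" by (simp add: algebra_simps)
  have "int p dvd a ^ p - a"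
  proof (cases "int p dvd a")
    case True
    have "a dvd a ^ p" using p_gt1 by (simp add: dvd_power)
    hence "int p dvd a ^ p" using True by (rule dvd_trans[rotated])
    thus ?thesis using True by simp
  next
    case False
    hence "int p dvd a * (a ^ (p - 1) - 1)" using fermat_int1 by simp
    moreover have "a * (a ^ (p - 1) - 1) = a ^ p - a"
      using p_gt1 by (simp add: algebra_simps power_Suc[symmetric])
    ultimately show ?thesis by simp
  qed
  moreover have "int p dvd a * (b ^ (p - 1) - 1)" using fermat_int1[OF that] by simp
  ultimately show ?thesis unfolding h by simp
qed

lemma small1_mult_p: "x \<in> Zp p \<Longrightarrow> small 1 (of_nat p * x)"
  using small_pow[of x 1] by simp

lemma small1_imp: "small 1 (of_nat p * x) \<Longrightarrow> x \<in> Zp p"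
  unfolding small_def using p_gt1 by auto

lemma fermat_Zp: assumes "c \<in> Zp p" shows "small 1 (c ^ p - c)"
proof -
  obtain a b where ab: "b \<noteq> 0" "\<not> int p dvd b" "c = of_int a / of_int b" using assms Zp_iff by blast
  obtain k where k: "a ^ p - a * b ^ (p - 1) = int p * k" using fermat_int2[OF ab(2), of a] by (elim dvdE)
  have bp: "(of_int b :: rat) ^ p = of_int b * of_int b ^ (p - 1)"
    using p_gt1 by (cases p) simp_all
  have "c ^ p - c = (of_int (a ^ p - a * b ^ (p - 1))) / of_int (b ^ p)"
    using ab(1) unfolding ab(3) by (simp add: field_simps power_divide bp)
  also have "\<dots> = of_nat p * (of_int k / of_int (b ^ p))" unfolding k by simp
  finally have eq: "c ^ p - c = of_nat p * (of_int k / of_int (b ^ p))" .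
  have "\<not> int p dvd b ^ p"
  proof
    have pi: "prime (int p)" using p by simp
    assume "int p dvd b ^ p"
    thus False using ab(2) prime_dvd_power[OF pi] by blast
  qed
  hence "of_int k / of_int (b ^ p) \<in> Zp p" using ab(1) by (intro Zp_intro) auto
  thus ?thesis unfolding eq by (rule small1_mult_p)
qed

lemma fact_decomp: "\<exists>u. \<not> p dvd u \<and> fact n = p ^ (n div p) * fact (n div p) * (u :: nat)"
proof (induction n)
  case 0 thus ?case using p_gt1 by (intro exI[of _ 1]) auto
next
  case (Suc n)
  then obtain u where u: "\<not> p dvd u" "fact n = p ^ (n div p) * fact (n div p) * (u :: nat)" by blast
  show ?case
  proof (cases "p dvd Suc n")
    case True
    have m0: "Suc n mod p = 0" using True by (simp add: dvd_eq_mod_eq_0)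
    have dS: "Suc n div p = (if Suc n mod p = 0 then Suc (n div p) else n div p)" by (rule div_Suc)
    have d: "Suc n div p = Suc (n div p)" using dS m0 by simp
    define q where "q = n div p"
    have "Suc n div p * p + Suc n mod p = Suc n" by (rule div_mult_mod_eq)
    hence sn: "Suc n = p * Suc q" using m0 d unfolding q_def by (simp add: mult.commute)
    have "fact (Suc n) = Suc n * fact n" by simp
    also have "\<dots> = p * Suc q * (p ^ q * fact q * u)" unfolding u(2) q_def[symmetric] sn ..
    also have "\<dots> = p ^ Suc q * (Suc q * fact q) * u" by (simp only: power_Suc mult_ac)
    also have "\<dots> = p ^ Suc q * fact (Suc q) * u" by simp
    finally have "fact (Suc n) = p ^ Suc q * fact (Suc q) * u" .
    thus ?thesis unfolding d q_def[symmetric] using u(1) by (intro exI[of _ u] conjI)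
  next
    case False
    have m0: "Suc n mod p \<noteq> 0" using False by (simp add: dvd_eq_mod_eq_0)
    have dS: "Suc n div p = (if Suc n mod p = 0 then Suc (n div p) else n div p)" by (rule div_Suc)
    have d: "Suc n div p = n div p" using dS m0 by simp
    have "fact (Suc n) = Suc n * (p ^ (n div p) * fact (n div p) * u)"
      unfolding u(2)[symmetric] by simp
    hence "fact (Suc n) = p ^ (n div p) * fact (n div p) * (Suc n * u)"
      by (simp only: mult_ac)
    moreover have "\<not> p dvd Suc n * u" using False u(1) prime_dvd_mult_iff[OF p, of "Suc n" u] by blast
    ultimately show ?thesis unfolding d by (intro exI[of _ "Suc n * u"] conjI)
  qed
qed

lemma legendre: "j \<ge> 1 \<Longrightarrow> (of_nat p :: rat) ^ (j - 1) / fact j \<in> Zp p"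
proof (induction j rule: less_induct)
  case (less j)
  obtain u where u: "\<not> p dvd u" "fact j = p ^ (j div p) * fact (j div p) * (u :: nat)"
    using fact_decomp by blast
  define q where "q = j div p"
  have fj: "(fact j :: rat) = of_nat p ^ q * fact q * of_nat u"
    using arg_cong[OF u(2), of "of_nat :: nat \<Rightarrow> rat"] unfolding q_def by simp
  show ?case
  proof (cases "q = 0")
    case True
    have "(of_nat p :: rat) ^ (j - 1) / fact j = of_nat (p ^ (j - 1)) / of_nat u" unfolding fj True by simp
    also have "\<dots> \<in> Zp p" by (rule Zp_div_nat[OF Zp_of_nat u(1)])
    finally show ?thesis .
  next
    case False
    have qj: "q < j" unfolding q_def using less.prems p_gt1 by simp
    have IH: "(of_nat p :: rat) ^ (q - 1) / fact q \<in> Zp p" using less.IH[OF qj] False by simp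
    have "p * q \<le> j" unfolding q_def by (simp add: times_div_less_eq_dividend)
    moreover have "2 * q \<le> p * q" using p_gt1 by (intro mult_le_mono1) simp
    ultimately have "2 * q \<le> j" by linarith
    hence jq: "j - 1 = (j - 2 * q) + q + (q - 1)" using False by arith
    have "(of_nat p :: rat) ^ (j - 1) / fact j = of_nat (p ^ (j - 2 * q)) * (of_nat p ^ (q - 1) / fact q) / of_nat u"
      unfolding fj jq power_add using p_gt1 by (simp add: field_simps)
    also have "\<dots> \<in> Zp p" by (intro Zp_div_nat Zp_mult Zp_of_nat IH u(1))
    finally show ?thesis .
  qed
qed

definition intw :: "rat fps \<Rightarrow> bool" where "intw x \<longleftrightarrow> (\<forall>j. x $ j \<in> Zp p)"
definition pdivw :: "rat fps \<Rightarrow> bool" where "pdivw x \<longleftrightarrow> (\<forall>j. small 1 (x $ j))"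

lemma intw_add: "intw x \<Longrightarrow> intw y \<Longrightarrow> intw (x + y)" by (auto simp: intw_def)
lemma intw_diff: "intw x \<Longrightarrow> intw y \<Longrightarrow> intw (x - y)" by (auto simp: intw_def)
lemma intw_mult: "intw x \<Longrightarrow> intw y \<Longrightarrow> intw (x * y)"
  unfolding intw_def fps_mult_nth by (auto intro!: Zp_sum Zp_mult)
lemma intw_one: "intw 1" by (auto simp: intw_def)
lemma intw_power: "intw x \<Longrightarrow> intw (x ^ n)"
  by (induction n) (auto intro: intw_mult intw_one)
lemma intw_const: "c \<in> Zp p \<Longrightarrow> intw (fps_const c)" by (auto simp: intw_def)
lemma intw_Xpow: "intw (fps_X ^ m)" by (auto simp: intw_def)
lemma intw_nat: "intw (of_nat m)" by (auto simp: intw_def fps_of_nat[symmetric])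

lemma pdivw_add: "pdivw x \<Longrightarrow> pdivw y \<Longrightarrow> pdivw (x + y)" by (auto simp: pdivw_def intro: small_add)
lemma pdivw_diff: "pdivw x \<Longrightarrow> pdivw y \<Longrightarrow> pdivw (x - y)" by (auto simp: pdivw_def intro: small_diff)
lemma pdivw_uminus: "pdivw x \<Longrightarrow> pdivw (- x)" by (auto simp: pdivw_def intro: small_uminus)
lemma pdivw_0: "pdivw 0" by (auto simp: pdivw_def)
lemma pdivw_sum: "(\<And>i. i \<in> A \<Longrightarrow> pdivw (f i)) \<Longrightarrow> pdivw (sum f A)"
  by (induction A rule: infinite_finite_induct) (auto intro: pdivw_add pdivw_0)
lemma pdivw_mult: "pdivw x \<Longrightarrow> intw y \<Longrightarrow> pdivw (x * y)"
  unfolding pdivw_def intw_def fps_mult_nth by (auto intro!: small_sum small_mult_Zp)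
lemma pdivw_mult': "intw y \<Longrightarrow> pdivw x \<Longrightarrow> pdivw (y * x)"
  using pdivw_mult[of x y] by (simp add: mult.commute)
lemma pdivw_p: assumes "intw x" shows "pdivw (of_nat p * x)"
  unfolding pdivw_def
proof
  fix j show "small 1 ((of_nat p * x) $ j)"
    unfolding nat_mult_nth by (rule small1_mult_p) (use assms in \<open>simp add: intw_def\<close>)
qed

lemma binom_frob:
  assumes "intw a" "intw b"
  shows "pdivw ((a + b) ^ p - a ^ p - b ^ p)"
proof -
  obtain k where k: "p = Suc k" using p_gt1 by (cases p) auto
  define g where "g i = of_nat (p choose i) * a ^ i * b ^ (p - i)" for i
  have "(a + b) ^ p = (\<Sum>i\<le>p. g i)" unfolding g_def by (rule binomial_ring)
  also have "\<dots> = g 0 + (\<Sum>i<k. g (Suc i)) + g p"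
    unfolding k by (simp add: sum.atMost_Suc sum.atMost_shift)
  finally have eq: "(a + b) ^ p - a ^ p - b ^ p = (\<Sum>i<k. g (Suc i))"
    unfolding g_def by simp
  have "pdivw (g (Suc i))" if "i < k" for i
  proof -
    have "p dvd (p choose Suc i)" using that k p by (intro dvd_choose_prime) auto
    then obtain m where m: "p choose Suc i = p * m" by blast
    have "g (Suc i) = of_nat p * (of_nat m * a ^ Suc i * b ^ (p - Suc i))"
      unfolding g_def m by (simp add: mult_ac)
    thus ?thesis using assms by (simp add: pdivw_p intw_mult intw_power intw_nat)
  qed
  thus ?thesis unfolding eq by (intro pdivw_sum) auto
qed

end

lemma exp_add:
  fixes B1 B2 :: "rat fps"
  assumes "B1 $ 0 = 0" "B2 $ 0 = 0"
  shows "fps_exp 1 oo (B1 + B2) = (fps_exp 1 oo B1) * (fps_exp 1 oo B2)"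
proof -
  have s0: "(B1 + B2) $ 0 = 0" using assms by simp
  have d1: "fps_deriv (fps_exp 1 oo (B1 + B2)) = (fps_deriv B1 + fps_deriv B2) * (fps_exp 1 oo (B1 + B2))"
    unfolding fps_compose_deriv[OF s0] by (simp add: mult.commute)
  have d2: "fps_deriv ((fps_exp 1 oo B1) * (fps_exp 1 oo B2)) = (fps_deriv B1 + fps_deriv B2) * ((fps_exp 1 oo B1) * (fps_exp 1 oo B2))"
    unfolding fps_deriv_mult fps_compose_deriv[OF assms(1)] fps_compose_deriv[OF assms(2)]
    by (simp add: algebra_simps)
  show ?thesis by (rule ode_unique[OF d1 d2]) simp
qed

lemma exp_nat_mult:
  fixes B :: "rat fps"
  assumes "B $ 0 = 0"
  shows "fps_exp 1 oo (of_nat n * B) = (fps_exp 1 oo B) ^ n"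
proof (induction n)
  case 0 thus ?case by simp
next
  case (Suc n)
  have "(of_nat n * B) $ 0 = 0" using assms by (simp add: nat_mult_nth)
  hence "fps_exp 1 oo (B + of_nat n * B) = (fps_exp 1 oo B) * (fps_exp 1 oo (of_nat n * B))"
    using exp_add assms by blast
  thus ?case using Suc by (simp add: algebra_simps)
qed

definition tr :: "nat \<Rightarrow> rat fps \<Rightarrow> rat fps" where
  "tr m F = Abs_fps (\<lambda>i. if i < m then F $ i else 0)"

lemma tr_nth: "tr m F $ i = (if i < m then F $ i else 0)" by (simp add: tr_def)

lemma tr_Suc: "tr (Suc m) F = tr m F + fps_const (F $ m) * fps_X ^ m"
proof (rule fps_ext)
  fix n show "tr (Suc m) F $ n = (tr m F + fps_const (F $ m) * fps_X ^ m) $ n"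
    by (cases "n < m"; cases "n = m") (auto simp: tr_nth)
qed

lemma tr_0: "tr 0 F = 0" by (rule fps_ext) (simp add: tr_nth)

context padic begin

abbreviation "B1 \<equiv> (fps_const 1 * fps_X ^ p :: rat fps)"

lemma B1_nth: "(G oo B1) $ n = (if p dvd n then G $ (n div p) else 0)"
  using compose_mono_nth[of p G 1 n] p_gt1 by simp

lemma intw_tr: "(\<And>i. i < m \<Longrightarrow> F $ i \<in> Zp p) \<Longrightarrow> intw (tr m F)"
  by (auto simp: intw_def tr_nth)

lemma frob:
  assumes "\<And>i. i < m \<Longrightarrow> F $ i \<in> Zp p"
  shows "pdivw ((tr m F) ^ p - (tr m F oo B1))"
  using assms
proof (induction m)
  case 0 thus ?case using p_gt1 by (simp add: tr_0 pdivw_0 power_0_left)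
next
  case (Suc m)
  define a where "a = tr m F"
  define c where "c = F $ m"
  define b where "b = fps_const c * fps_X ^ m"
  have c: "c \<in> Zp p" using Suc.prems c_def by simp
  have ia: "intw a" unfolding a_def using Suc.prems by (intro intw_tr) simp
  have ib: "intw b" unfolding b_def using c by (intro intw_mult intw_const intw_Xpow)
  have IH: "pdivw (a ^ p - (a oo B1))" unfolding a_def using Suc by simp
  have pb: "pdivw (b ^ p - (b oo B1))"
    unfolding pdivw_def
  proof
    fix n
    have bp: "b ^ p = fps_const (c ^ p) * fps_X ^ (m * p)"
      unfolding b_def by (simp add: power_mult_distrib power_mult)
    have "(b ^ p - (b oo B1)) $ n = (if n = m * p then c ^ p - c else 0)"
      unfolding fps_sub_nth B1_nth bp using p_gt1 by (auto simp: b_def)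
    thus "small 1 ((b ^ p - (b oo B1)) $ n)" using fermat_Zp[OF c] by simp
  qed
  have eq: "(tr (Suc m) F) ^ p - (tr (Suc m) F oo B1)
      = ((a + b) ^ p - a ^ p - b ^ p) + (a ^ p - (a oo B1)) + (b ^ p - (b oo B1))"
    unfolding tr_Suc a_def[symmetric] c_def[symmetric] b_def[symmetric] fps_compose_add_distrib
    by (simp add: algebra_simps)
  show ?case unfolding eq by (intro pdivw_add binom_frob ia ib IH pb)
qed

lemma L_frob: "L oo B1 = of_nat p * L + fps_const (- of_nat p) * fps_X"
proof (rule fps_ext)
  fix n
  have rhs: "(of_nat p * L + fps_const (- of_nat p) * fps_X) $ n = of_nat p * L $ n - (if n = 1 then of_nat p else 0)"
    by (simp add: nat_mult_nth)
  show "(L oo B1) $ n = (of_nat p * L + fps_const (- of_nat p) * fps_X) $ n"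
    unfolding rhs B1_nth
  proof (cases "\<exists>i. n = p ^ i")
    case True
    then obtain i where i: "n = p ^ i" by blast
    show "(if p dvd n then L $ (n div p) else 0) = of_nat p * L $ n - (if n = 1 then of_nat p else 0)"
    proof (cases i)
      case 0
      have "\<not> p dvd 1" using p_gt1 by simp
      moreover have "L $ 1 = 1" using L_pow[of 0] by simp
      ultimately show ?thesis using i 0 by simp
    next
      case (Suc i')
      have "n \<noteq> 1" using i Suc p_gt1 by simp
      moreover have "p dvd n" using i Suc by simp
      moreover have "n div p = p ^ i'" using i Suc p_gt1 by simp
      ultimately show ?thesis unfolding i Suc L_pow using p_gt1 i Suc
        by (simp del: power_Suc of_nat_power add: L_pow) (simp add: field_simps)
    qed
  next
    case False
    have Ln: "L $ n = 0" using L_notpow False by blast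
    have n1: "n \<noteq> 1" using False by (metis power_0)
    have "p dvd n \<Longrightarrow> L $ (n div p) = 0"
    proof (rule L_notpow, rule notI)
      assume "p dvd n" "\<exists>i. n div p = p ^ i"
      then obtain i where "n div p = p ^ i" by blast
      hence "n = p ^ Suc i" using \<open>p dvd n\<close> by (metis dvd_mult_div_cancel power_Suc)
      thus False using False by blast
    qed
    thus "(if p dvd n then L $ (n div p) else 0) = of_nat p * L $ n - (if n = 1 then of_nat p else 0)"
      using Ln n1 by simp
  qed
qed

lemma E_frob: "E oo B1 = E ^ p * fps_exp (- of_nat p)"
proof -
  have b0: "B1 $ 0 = 0" using p_gt1 by simp
  have "E oo B1 = fps_exp 1 oo (L oo B1)"
    unfolding artin_hasse_def by (rule fps_compose_assoc[OF b0 L0, symmetric])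
  also have "\<dots> = (fps_exp 1 oo (of_nat p * L)) * (fps_exp 1 oo (fps_const (- of_nat p) * fps_X))"
    unfolding L_frob by (rule exp_add) (simp_all add: nat_mult_nth L0)
  also have "\<dots> = E ^ p * fps_exp (- of_nat p)"
    unfolding exp_nat_mult[OF L0] artin_hasse_def by simp
  finally show ?thesis .
qed

lemma binom2:
  fixes F H :: "'a::comm_ring_1 fps"
  shows "\<exists>Q. (F + H) ^ Suc k = F ^ Suc k + of_nat (Suc k) * F ^ k * H + H * H * Q"
proof (induction k)
  case 0 show ?case by (intro exI[of _ 0]) simp
next
  case (Suc k)
  then obtain Q where Q: "(F + H) ^ Suc k = F ^ Suc k + of_nat (Suc k) * F ^ k * H + H * H * Q" by blast
  have "(F + H) ^ Suc (Suc k) = (F + H) * (F ^ Suc k + of_nat (Suc k) * F ^ k * H + H * H * Q)"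
    using Q by simp
  also have "\<dots> = F ^ Suc (Suc k) + of_nat (Suc (Suc k)) * F ^ Suc k * H
      + H * H * (F * Q + of_nat (Suc k) * F ^ k + H * Q)"
    by (simp add: algebra_simps)
  finally show ?case by blast
qed

lemma hv1: "(\<And>i. i < n \<Longrightarrow> H $ i = 0) \<Longrightarrow> j < n \<Longrightarrow> (Z * H) $ j = (0 :: 'a::comm_ring_1)"
  unfolding fps_mult_nth by (intro sum.neutral) auto

lemma hv2: "(\<And>i. i < n \<Longrightarrow> H $ i = 0) \<Longrightarrow> (Z * H) $ n = Z $ 0 * (H $ n :: 'a::comm_ring_1)"
  unfolding fps_mult_nth
  by (subst sum.mono_neutral_right[of "{0..n}" "{0}"]) auto

lemma G_pdiv: "pdivw (fps_exp (- of_nat p) - 1)"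
  unfolding pdivw_def
proof
  fix j
  show "small 1 ((fps_exp (- of_nat p) - 1) $ j)"
  proof (cases j)
    case 0 thus ?thesis by simp
  next
    case (Suc j')
    have j0: "j \<noteq> 0" using Suc by simp
    have "(fps_exp (- of_nat p) - 1) $ j = (- of_nat p :: rat) ^ j / fact j" using j0 by simp
    also have "\<dots> = of_nat p * ((-1) ^ j * (of_nat p ^ (j - 1) / fact j))"
      unfolding Suc power_minus[of "of_nat p :: rat"] by (simp add: mult_ac)
    also have "small 1 \<dots>"
    proof (rule small1_mult_p, rule Zp_mult)
      show "(-1 :: rat) ^ j \<in> Zp p" by (intro Zp_power Zp_uminus Zp_1)
      show "of_nat p ^ (j - 1) / fact j \<in> Zp p" using legendre[of j] j0 by simp
    qed
    finally show ?thesis .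
  qed
qed

lemma E_int: "E $ n \<in> Zp p"
proof (induction n rule: less_induct)
  case (less n)
  show ?case
  proof (cases "n = 0")
    case True thus ?thesis using E0 by simp
  next
    case False
    define F where "F = tr n E"
    define H where "H = E - F"
    define G where "G = (fps_exp (- of_nat p) :: rat fps)"
    obtain k where k: "p = Suc k" using p_gt1 by (cases p) auto
    have Hl: "H $ i = 0" if "i < n" for i using that by (simp add: H_def F_def tr_nth)
    have Hn: "H $ n = E $ n" by (simp add: H_def F_def tr_nth)
    have H0: "H $ 0 = 0" using Hl False by simp
    have F0: "F $ 0 = 1" using False E0 by (simp add: F_def tr_nth)
    obtain Q where Q: "E ^ p = F ^ p + of_nat p * F ^ k * H + (H * Q) * H"
      using binom2[of F H k] unfolding H_def k by (auto simp: mult_ac)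
    have lo: "(E ^ p) $ j = (F ^ p) $ j" if "j < n" for j
      unfolding Q using hv1[OF Hl that] by simp
    have hi: "(E ^ p) $ n = (F ^ p) $ n + of_nat p * E $ n"
      unfolding Q using hv2[OF Hl, where Z = "of_nat p * F ^ k"] hv2[OF Hl, where Z = "H * Q"] H0 F0 Hn
      by (simp add: fps_power_zeroth nat_mult_nth)
    have G0: "G $ 0 = 1" by (simp add: G_def)
    have "(E ^ p * G) $ n - (F ^ p * G) $ n = (\<Sum>a=0..n. (E ^ p) $ a * G $ (n - a) - (F ^ p) $ a * G $ (n - a))"
      unfolding fps_mult_nth by (rule sum_subtractf[symmetric])
    also have "\<dots> = (\<Sum>a=0..n. ((E ^ p) $ a - (F ^ p) $ a) * G $ (n - a))"
      by (simp add: left_diff_distrib)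
    also have "\<dots> = (\<Sum>a=0..n. if a = n then of_nat p * E $ n else 0)"
      using lo hi G0 by (intro sum.cong refl) auto
    also have "\<dots> = of_nat p * E $ n" by simp
    finally have e1: "(E ^ p * G) $ n = (F ^ p * G) $ n + of_nat p * E $ n" by simp
    have e2: "(E oo B1) $ n = (F oo B1) $ n"
    proof -
      have "p dvd n \<Longrightarrow> n div p < n" using False p_gt1 by simp
      thus ?thesis unfolding B1_nth by (auto simp: F_def tr_nth)
    qed
    have "of_nat p * E $ n = - ((F ^ p - (F oo B1)) $ n) - (F ^ p * (G - 1)) $ n"
      using e1 e2 E_frob unfolding G_def[symmetric] by (simp add: algebra_simps)
    moreover have iF: "intw F" unfolding F_def by (intro intw_tr less.IH)
    have "pdivw (- (F ^ p - (F oo B1)) - F ^ p * (G - 1))"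
      unfolding F_def G_def
      by (intro pdivw_diff pdivw_uminus frob less.IH pdivw_mult' intw_power intw_tr G_pdiv)
    ultimately have "small 1 (of_nat p * E $ n)" unfolding pdivw_def by (metis fps_sub_nth fps_neg_nth)
    thus ?thesis by (rule small1_imp)
  qed
qed

end

context padic begin

lemma intw_sum: "(\<And>x. x \<in> A \<Longrightarrow> intw (f x)) \<Longrightarrow> intw (sum f A)"
  unfolding intw_def fps_sum_nth by (auto intro!: Zp_sum)

definition intB :: "rat fps fps \<Rightarrow> bool" where "intB T \<longleftrightarrow> (\<forall>i. intw (T $ i))"

lemma intB_mult: "intB S \<Longrightarrow> intB T \<Longrightarrow> intB (S * T)"
  unfolding intB_def fps_mult_nth by (auto intro!: intw_sum intw_mult)

lemma intw_zvar: "intw zvar"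
  unfolding zvar_def by (intro intw_diff intw_one) (simp add: intw_def)

lemma intB_subst: assumes "intw c" shows "intB (subst_tm E c m)"
  unfolding intB_def
proof
  fix i
  show "intw (subst_tm E c m $ i)"
    unfolding subst_tm_nth using assms
    by (auto intro!: intw_mult intw_const intw_power E_int simp: intw_def[of 0])
qed

lemma intB_inverse:
  assumes F0: "F $ 0 = 1" and iF: "intB F"
  shows "intB (inverse F)"
proof -
  define U where "U = inverse F"
  have FU: "F * U = 1" unfolding U_def by (rule inv_right[OF F0])
  have "intw (U $ n)" for n
  proof (induction n rule: less_induct)
    case (less n)
    show ?case
    proof (cases n)
      case 0
      have "(F * U) $ 0 = 1" using FU by simp
      hence "U $ 0 = 1" using F0 by simp
      thus ?thesis using 0 intw_one by simp
    next
      case (Suc m)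
      have "(F * U) $ n = 0" using FU Suc by simp
      hence "(\<Sum>a=0..n. F $ a * U $ (n - a)) = 0" unfolding fps_mult_nth .
      moreover have "(\<Sum>a=0..n. F $ a * U $ (n - a)) = U $ n + (\<Sum>a=1..n. F $ a * U $ (n - a))"
        using F0 by (simp add: sum.atLeast_Suc_atMost[of 0 n])
      ultimately have "U $ n = - (\<Sum>a=1..n. F $ a * U $ (n - a))" by (simp add: eq_neg_iff_add_eq_0)
      moreover have "intw (\<Sum>a=1..n. F $ a * U $ (n - a))"
        using iF less Suc by (intro intw_sum intw_mult) (auto simp: intB_def)
      ultimately show ?thesis by (auto simp: intw_def intro: Zp_uminus)
    qed
  qed
  thus ?thesis unfolding intB_def U_def by blast
qed

lemma intB_f: "intB (f_AH p)"
proof -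
  have c0: "(subst_tm E 1 1 * subst_tm E zvar p) $ 0 = 1" by (simp add: subst_0 E0)
  show ?thesis unfolding f_AH_def
    by (intro intB_mult intB_inverse c0 intB_subst intw_zvar intw_one)
qed

end

lemma ones_mult: "(h * Abs_fps (\<lambda>_. 1)) $ i = (\<Sum>a\<le>i. h $ a :: 'a::comm_ring_1)"
  by (simp add: fps_mult_nth atLeast0AtMost)

lemma Xm1_ones: "(fps_X - 1) * Abs_fps (\<lambda>_. 1 :: 'a::comm_ring_1) = - 1"
proof (rule fps_ext)
  fix n show "((fps_X - 1) * Abs_fps (\<lambda>_. 1 :: 'a)) $ n = (- 1 :: 'a fps) $ n"
    by (cases n) (simp_all add: algebra_simps)
qed

theorem lemma9p4:
  fixes p :: nat
  assumes "prime p"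
  shows "\<exists>g. in_Zp_tate_pow p g \<and>
           f_AH p = fps_const zvar + (fps_X - 1) * g"
proof -
  interpret padic p using assms by unfold_locales
  define h where "h = f_AH p - fps_const zvar"
  define g where "g = - (h * Abs_fps (\<lambda>_. 1))"
  have eq: "f_AH p = fps_const zvar + (fps_X - 1) * g"
  proof -
    have "(fps_X - 1) * g = - ((fps_X - 1) * Abs_fps (\<lambda>_. 1)) * h"
      unfolding g_def by (simp add: mult_ac)
    also have "\<dots> = h" unfolding Xm1_ones by simp
    finally show ?thesis unfolding h_def by simp
  qed
  have gij: "g $ i $ j = - ((\<Sum>m\<le>i. f_AH p $ m $ j) - zvar $ j)" for i j
  proof -
    have "g $ i = - (\<Sum>a\<le>i. h $ a)" unfolding g_def fps_neg_nth ones_mult ..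
    hence "g $ i $ j = - (\<Sum>a\<le>i. h $ a $ j)" by (simp add: fps_sum_nth)
    also have "(\<Sum>a\<le>i. h $ a $ j) = (\<Sum>m\<le>i. f_AH p $ m $ j) - (\<Sum>m\<le>i. (fps_const zvar) $ m $ j)"
      unfolding h_def by (simp add: sum_subtractf)
    also have "(\<Sum>m\<le>i. (fps_const zvar) $ m $ j) = zvar $ j"
      by (simp add: sum.atMost_shift)
    finally show ?thesis .
  qed
  have zj: "zvar $ j \<in> Zp p" for j using intw_zvar by (simp add: intw_def)
  have fint: "f_AH p $ m $ j \<in> Zp p" for m j using intB_f by (simp add: intB_def intw_def)
  have tt: "tate (f_AH p) zvar" using tate_ExpT_A f_eq by simp
  have "in_Zp_tate_pow p g"
    unfolding in_Zp_tate_pow_def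
  proof (intro conjI allI)
    fix i j show "g $ i $ j \<in> Zp p" unfolding gij using fint zj by (intro Zp_uminus Zp_diff Zp_sum) auto
  next
    fix j k
    have "\<forall>\<^sub>F i in sequentially. small k ((\<Sum>m\<le>i. col (f_AH p) j $ m) - zvar $ j)"
      using tt unfolding tate_def conv_def by blast
    thus "\<forall>\<^sub>F i in sequentially. \<exists>r\<in>Zp p. g $ i $ j = of_nat (p ^ k) * r"
    proof eventually_elim
      case (elim i)
      hence "small k (g $ i $ j)" unfolding gij by (intro small_uminus) simp
      thus ?case unfolding small_def .
    qed
  qed
  thus ?thesis using eq by blast
qed

end
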